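(* For integers $n\ge 1$ let $\mu=\mu(n)=\frac{\pi}{6}\sqrt{24n-1}$ and \[ T(n)=\frac{\sqrt{12}}{24n-1}\left[\left(1-\frac{1}{\mu}\right)e^{\mu}+\frac{(-1)^n}{\sqrt2}e^{\mu/2}\right]. \] Let $T_1(n)=2\log T(n)-\log T(n-1)-\log T(n+1)$ and $C=\pi\sqrt{2/3}$. Then for all integers $n\ge 50$, \[ \frac{24\pi}{(24(n+1)-1)^{3/2}}-\frac{3}{n^2} < T_1(n) < \frac{24\pi}{(24(n-1)-1)^{3/2}}+e^{-C\sqrt n/10}. \]
   Context: $\log$ denotes the natural logarithm. *)

theory Defs
  imports Complex_Main
begin

definition mu :: "nat \<Rightarrow> real" where
  "mu n = pi / 6 * sqrt (24 * real n - 1)"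

definition T :: "nat \<Rightarrow> real" where
  "T n = sqrt 12 / (24 * real n - 1) *
     ((1 - 1 / mu n) * exp (mu n) + (-1) ^ n / sqrt 2 * exp (mu n / 2))"

definition T1 :: "nat \<Rightarrow> real" where
  "T1 n = 2 * ln (T n) - ln (T (n - 1)) - ln (T (n + 1))"

definition C :: real where
  "C = pi * sqrt (2 / 3)"

end

theory Submission
  imports Defs "HOL-Analysis.Analysis"
begin


lemma sqrt_diff2:
  fixes a :: real assumes a: "a > 24"
  shows "144 / ((a+24) * sqrt (a+24)) < 2 * sqrt a - sqrt (a-24) - sqrt (a+24)
       \<and> 2 * sqrt a - sqrt (a-24) - sqrt (a+24) < 144 / ((a-24) * sqrt (a-24))"
proof -
  define p where "p = sqrt (a-24)"
  define q where "q = sqrt a"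
  define r where "r = sqrt (a+24)"
  have p0: "p > 0" using a by (simp add: p_def)
  have pq: "p < q" using a by (simp add: p_def q_def)
  have qr: "q < r" using a by (simp add: r_def q_def)
  have p2: "p^2 = a - 24" using a by (simp add: p_def)
  have q2: "q^2 = a" using a by (simp add: q_def)
  have r2: "r^2 = a + 24" using a by (simp add: r_def)
  have key: "2*q - p - r = 1152 / ((p+q)*(q+r)*(p+r))"
  proof -
    have "(2*q - p - r) * ((p+q)*(q+r)*(p+r)) = 1152"
    proof -
      have "(2*q - p - r) * ((p+q)*(q+r)*(p+r)) = 
        ((q^2-p^2)*(q+r) - (r^2-q^2)*(p+q))*(p+r)" by (simp add: algebra_simps power2_eq_square)
      also have "\<dots> = 24 * (r - p) * (p+r)"
      proof -
        have e1: "q^2 - p^2 = 24" and e2: "r^2 - q^2 = 24" using p2 q2 r2 by simp_all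
        show ?thesis unfolding e1 e2 by (simp add: algebra_simps)
      qed
      also have "\<dots> = 24 * (r^2 - p^2)" by (simp add: algebra_simps power2_eq_square)
      also have "\<dots> = 1152" using p2 r2 by simp
      finally show ?thesis .
    qed
    moreover have "(p+q)*(q+r)*(p+r) > 0" using p0 pq qr by simp
    ultimately show ?thesis by (simp add: field_simps)
  qed
  have lo: "(p+q)*(q+r)*(p+r) < 8 * (r^2 * r)"
  proof -
    have "(p+q)*(q+r) < (2*r)*(2*r)" using p0 pq qr by (intro mult_strict_mono) auto
    hence "(p+q)*(q+r)*(p+r) < (2*r)*(2*r)*(2*r)" using p0 pq qr
      by (intro mult_strict_mono) auto
    thus ?thesis by (simp add: power2_eq_square)
  qed
  have hi: "8 * (p^2 * p) < (p+q)*(q+r)*(p+r)"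
  proof -
    have "(2*p)*(2*p) < (p+q)*(q+r)" using p0 pq qr by (intro mult_strict_mono) auto
    hence "(2*p)*(2*p)*(2*p) < (p+q)*(q+r)*(p+r)" using p0 pq qr
      by (intro mult_strict_mono) auto
    thus ?thesis by (simp add: power2_eq_square)
  qed
  have P0: "(p+q)*(q+r)*(p+r) > 0" using p0 pq qr by simp
  have "144 / (r^2 * r) < 1152 / ((p+q)*(q+r)*(p+r))"
    using lo P0 p0 pq qr by (simp add: field_simps)
  moreover have "1152 / ((p+q)*(q+r)*(p+r)) < 144 / (p^2 * p)"
    using hi P0 p0 by (simp add: field_simps)
  ultimately show ?thesis using key p2 r2 by (simp add: p_def q_def r_def)
qed



lemma ln_upper_lower:
  fixes x :: real assumes "x > -1"
  shows "x / (1 + x) \<le> ln (1 + x) \<and> ln (1 + x) \<le> x"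
proof
  have "ln (1 + x) \<le> (1 + x) - 1" using assms by (intro ln_le_minus_one) auto
  thus "ln (1+x) \<le> x" by simp
  have "ln (1 / (1 + x)) \<le> 1 / (1 + x) - 1" using assms by (intro ln_le_minus_one) auto
  moreover have "ln (1 / (1 + x)) = - ln (1 + x)" using assms by (simp add: ln_div)
  moreover have "1 / (1 + x) - 1 = - (x / (1 + x))" using assms by (simp add: field_simps)
  ultimately show "x / (1 + x) \<le> ln (1 + x)" by simp
qed

lemma ln_abs_bound:
  fixes x :: real assumes "\<bar>x\<bar> < 1"
  shows "\<bar>ln (1 + x)\<bar> \<le> \<bar>x\<bar> / (1 - \<bar>x\<bar>)"
proof -
  have h: "x / (1 + x) \<le> ln (1 + x) \<and> ln (1 + x) \<le> x" using assms by (intro ln_upper_lower) auto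
  have d: "\<bar>x\<bar> \<le> \<bar>x\<bar> / (1 - \<bar>x\<bar>)" using assms by (simp add: field_simps)
  have "- (\<bar>x\<bar> / (1 - \<bar>x\<bar>)) \<le> x / (1 + x)"
  proof (cases "x \<ge> 0")
    case True thus ?thesis using assms by (simp add: field_simps)
  next
    case False thus ?thesis using assms by (simp add: field_simps)
  qed
  thus ?thesis using h d by (simp add: abs_le_iff)
qed

lemma exp_89:
  "exp (89/10 :: real) \<ge> 5500"
proof -
  have e1: "exp (89/10::real) = exp ((89/400::real)) ^ 40"
    by (simp add: exp_of_nat_mult[symmetric])
  have e2: "exp (89/400::real) \<ge> 1247/1000"
  proof -
    have "1 + 89/400 + (89/400)^2/2 \<le> exp (89/400::real)" by (rule exp_lower_Taylor_quadratic) simp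
    moreover have "(1247/1000::real) \<le> 1 + 89/400 + (89/400)^2/2" by (simp add: power2_eq_square)
    ultimately show ?thesis by linarith
  qed
  have e3: "exp (89/400::real) ^ 40 \<ge> (1247/1000) ^ 40" using e2 by (intro power_mono) auto
  have e4: "(1247/1000::real) ^ 40 \<ge> 5500" by (simp add: power_divide)
  show ?thesis using e1 e3 e4 by linarith
qed

lemma exp_poly:
  fixes y :: real assumes "y \<ge> 89/10"
  shows "exp y \<ge> 5500 * (y / (89/10)) ^ 4"
proof -
  have "exp y = exp (89/10 + 4 * ((y - 89/10)/4))" by (simp add: field_simps)
  also have "\<dots> = exp (89/10) * exp ((y - 89/10)/4) ^ 4"
    by (simp only: exp_add exp_of_nat_mult[symmetric]) simp
  finally have "exp y = exp (89/10) * exp ((y - 89/10)/4) ^ 4" .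
  moreover have "exp ((y - 89/10)/4) \<ge> y / (89/10)"
  proof -
    have "exp ((y - 89/10)/4) \<ge> 1 + (y - 89/10)/4" by simp
    moreover have "1 + (y - 89/10)/4 \<ge> y / (89/10)" using assms by (simp add: field_simps)
    ultimately show ?thesis by linarith
  qed
  hence "exp ((y - 89/10)/4) ^ 4 \<ge> (y / (89/10)) ^ 4" using assms by (intro power_mono) auto
  ultimately have "exp y \<ge> exp (89/10) * (y / (89/10)) ^ 4"
    by simp
  moreover have "exp (89/10) * (y / (89/10)) ^ 4 \<ge> 5500 * (y / (89/10)) ^ 4"
    using exp_89 by (intro mult_right_mono) auto
  ultimately show ?thesis by simp
qed



definition epsk :: "nat \<Rightarrow> real" where
  "epsk k = (-1)^k * exp (- mu k / 2) * mu k / (sqrt 2 * (mu k - 1))"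

lemma T_eq:
  assumes "mu k > 1" "24 * real k - 1 > 0"
  shows "T k = sqrt 12 / (24 * real k - 1) * exp (mu k) * ((mu k - 1) / mu k) * (1 + epsk k)"
proof -
  have e: "exp (mu k) * exp (- mu k / 2) = exp (mu k / 2)"
    by (simp add: exp_add[symmetric])
  have "exp (mu k) * ((mu k - 1) / mu k) * (1 + epsk k)
      = (1 - 1 / mu k) * exp (mu k) + (-1) ^ k / sqrt 2 * (exp (mu k) * exp (- mu k / 2))"
    using assms unfolding epsk_def by (simp add: field_simps)
  also have "\<dots> = (1 - 1 / mu k) * exp (mu k) + (-1) ^ k / sqrt 2 * exp (mu k / 2)"
    by (simp only: e)
  finally have h: "exp (mu k) * ((mu k - 1) / mu k) * (1 + epsk k)
      = (1 - 1 / mu k) * exp (mu k) + (-1) ^ k / sqrt 2 * exp (mu k / 2)" .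
  show ?thesis unfolding T_def h[symmetric] by (simp only: mult.assoc)
qed

lemma lnT:
  assumes "mu k > 1" "24 * real k - 1 > 0" "1 + epsk k > 0"
  shows "ln (T k) = ln (sqrt 12) - ln (24 * real k - 1) + mu k + ln (mu k - 1) - ln (mu k) + ln (1 + epsk k)"
proof -
  have "ln (T k) = ln (sqrt 12 / (24 * real k - 1) * exp (mu k) * ((mu k - 1) / mu k) * (1 + epsk k))"
    using T_eq[OF assms(1,2)] by simp
  also have "\<dots> = ln (sqrt 12) - ln (24 * real k - 1) + mu k + (ln (mu k - 1) - ln (mu k)) + ln (1 + epsk k)"
    using assms by (simp add: ln_mult ln_div)
  finally show ?thesis by simp
qed


lemma eps_bound:
  assumes "mu k \<ge> 178/10" "mu k \<ge> m0"
  shows "\<bar>epsk k\<bar> \<le> 3/4 * exp (- m0 / 2)"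
proof -
  have s2: "sqrt 2 \<ge> (1414/1000::real)" by (rule real_le_rsqrt) (simp add: power2_eq_square)
  have "\<bar>epsk k\<bar> = exp (- mu k / 2) * (mu k / (sqrt 2 * (mu k - 1)))"
    using assms unfolding epsk_def by (simp add: abs_mult power_abs)
  also have "\<dots> \<le> exp (- m0 / 2) * (3/4)"
  proof (rule mult_mono)
    show "exp (- mu k / 2) \<le> exp (- m0 / 2)" using assms by simp
    have "mu k \<le> 3/4 * (1414/1000 * (mu k - 1))" using assms by simp
    also have "\<dots> \<le> 3/4 * (sqrt 2 * (mu k - 1))" using s2 assms by (intro mult_left_mono mult_right_mono) auto
    finally show "mu k / (sqrt 2 * (mu k - 1)) \<le> 3/4" using assms s2 by (simp add: field_simps)
  qed (use assms in auto)
  finally show ?thesis by simp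
qed

lemma ln_pisqrt:
  fixes x :: real assumes "x > 0"
  shows "ln (pi/6 * sqrt x) = ln (pi/6) + ln x / 2"
proof -
  have "ln (pi/6 * sqrt x) = ln (pi/6) + ln (sqrt x)" by (subst ln_mult) (use assms in auto)
  thus ?thesis using assms by (simp add: ln_sqrt)
qed

theorem lemma2p2:
  fixes n :: nat
  assumes "n \<ge> 50"
  shows "24 * pi / (24 * (real n + 1) - 1) powr (3 / 2) - 3 / (real n)^2 < T1 n
       \<and> T1 n < 24 * pi / (24 * (real n - 1) - 1) powr (3 / 2) + exp (- C * sqrt (real n) / 10)"
proof -
  have n50: "real n \<ge> 50" using assms by simp
  define a where "a = 24 * real n - 1"
  have a_ge: "a \<ge> 1199" using n50 by (simp add: a_def)
  have rn1: "real (n - 1) = real n - 1" using assms by simp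
  have rn1': "real (n - Suc 0) = real n - 1" using assms by simp
  have m0d: "mu (n-1) = pi/6 * sqrt (a - 24)" unfolding mu_def a_def rn1 by (simp add: algebra_simps)
  have m1d: "mu n = pi/6 * sqrt a" unfolding mu_def a_def by simp
  have m2d: "mu (n+1) = pi/6 * sqrt (a + 24)" unfolding mu_def a_def by (simp add: algebra_simps)
  define m0 where "m0 = mu (n-1)"
  define m1 where "m1 = mu n"
  define m2 where "m2 = mu (n+1)"
  have pi314: "pi \<ge> 314/100" using pi_approx(1) by simp
  have sq0: "sqrt (a - 24) \<ge> 342/10" using a_ge by (intro real_le_rsqrt) (simp add: power2_eq_square)
  have sq1: "sqrt a \<ge> 346/10" using a_ge by (intro real_le_rsqrt) (simp add: power2_eq_square)
  have m0_ge: "m0 \<ge> 178/10"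
  proof -
    have "(314/100)/6 * (342/10) \<le> pi/6 * sqrt (a - 24)" using pi314 sq0 by (intro mult_mono) auto
    thus ?thesis unfolding m0_def m0d by simp
  qed
  have m1_ge: "m1 \<ge> 18"
  proof -
    have "(314/100)/6 * (346/10) \<le> pi/6 * sqrt a" using pi314 sq1 by (intro mult_mono) auto
    thus ?thesis unfolding m1_def m1d by simp
  qed
  have m01: "m0 \<le> m1" unfolding m0_def m1_def m0d m1d by (intro mult_left_mono) auto
  have m12: "m1 \<le> m2" unfolding m2_def m1_def m2d m1d by (intro mult_left_mono) auto
  have sd: "144 / ((a+24) * sqrt (a+24)) < 2 * sqrt a - sqrt (a-24) - sqrt (a+24)
       \<and> 2 * sqrt a - sqrt (a-24) - sqrt (a+24) < 144 / ((a-24) * sqrt (a-24))"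
    using a_ge by (intro sqrt_diff2) simp
  define D where "D = 2*m1 - m0 - m2"
  have Dd: "D = pi/6 * (2 * sqrt a - sqrt (a-24) - sqrt (a+24))"
    unfolding D_def m0_def m1_def m2_def m0d m1d m2d by (simp add: algebra_simps)
  have pw: "\<And>x::real. x > 0 \<Longrightarrow> x powr (3/2) = x * sqrt x"
  proof -
    fix x :: real assume "x > 0"
    hence "x powr (1 + 1/2) = x powr 1 * x powr (1/2)" by (simp only: powr_add)
    thus "x powr (3/2) = x * sqrt x" using \<open>x > 0\<close> by (simp add: powr_half_sqrt)
  qed
  have up_eq: "24 * pi / (24 * (real n - 1) - 1) powr (3 / 2) = pi/6 * (144 / ((a-24) * sqrt (a-24)))"
  proof -
    have h: "24 * (real n - 1) - 1 = a - 24" by (simp add: a_def algebra_simps)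
    have "(a - 24) powr (3/2) = (a - 24) * sqrt (a - 24)" using a_ge by (intro pw) simp
    thus ?thesis unfolding h by simp
  qed
  have lo_eq: "24 * pi / (24 * (real n + 1) - 1) powr (3 / 2) = pi/6 * (144 / ((a+24) * sqrt (a+24)))"
  proof -
    have h: "24 * (real n + 1) - 1 = a + 24" by (simp add: a_def algebra_simps)
    have "(a + 24) powr (3/2) = (a + 24) * sqrt (a + 24)" using a_ge by (intro pw) simp
    thus ?thesis unfolding h by simp
  qed
  have D_lo: "24 * pi / (24 * (real n + 1) - 1) powr (3 / 2) < D"
    unfolding lo_eq Dd using sd by (intro mult_strict_left_mono) auto
  have D_up: "D < 24 * pi / (24 * (real n - 1) - 1) powr (3 / 2)"
    unfolding up_eq Dd using sd by (intro mult_strict_left_mono) auto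
  have D_pos: "D > 0"
  proof -
    have "0 < 24 * pi / (24 * (real n + 1) - 1) powr (3 / 2)" using n50 by (intro divide_pos_pos) auto
    thus ?thesis using D_lo by linarith
  qed
  define t where "t = 576 / a^2"
  have a_n: "a \<ge> 2398/100 * real n" using n50 by (simp add: a_def)
  have t_le: "t \<le> 1002/1000 / (real n)^2"
  proof -
    have "(2398/100 * real n)^2 \<le> a^2" using a_n n50 by (intro power_mono) auto
    moreover have "0 < a^2 * (2398/100 * real n)^2" using a_ge n50 by simp
    ultimately have "576 / a^2 \<le> 576 / (2398/100 * real n)^2" by (intro divide_left_mono) auto
    also have "\<dots> \<le> 1002/1000 / (real n)^2" using n50 by (simp add: field_simps power2_eq_square)
    finally show ?thesis by (simp add: t_def)
  qed
  have n2: "(real n)^2 \<ge> 2500" using n50 power_mono[of 50 "real n" 2] by simp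
  have t_small: "t \<le> 1/1000"
  proof -
    have "1002/1000 / (real n)^2 \<le> 1002/1000 / 2500" using n2 n50 by (intro divide_left_mono) auto
    thus ?thesis using t_le by simp
  qed
  have t_pos: "t > 0" using a_ge by (simp add: t_def)
  have lnA: "ln (a - 24) + ln (a + 24) - 2 * ln a = ln (1 - t)"
  proof -
    have "(a-24)*(a+24) / a^2 = 1 - t" using a_ge by (simp add: t_def field_simps power2_eq_square)
    moreover have "ln ((a-24)*(a+24) / a^2) = ln (a - 24) + ln (a + 24) - 2 * ln a"
      using a_ge by (simp add: ln_mult ln_div ln_realpow)
    ultimately show ?thesis by simp
  qed
  have lnM: "ln m0 + ln m2 - 2 * ln m1 = ln (1 - t) / 2"
  proof -
    have "ln m0 = ln (pi/6) + ln (a - 24) / 2" unfolding m0_def m0d using a_ge by (intro ln_pisqrt) simp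
    moreover have "ln m1 = ln (pi/6) + ln a / 2" unfolding m1_def m1d using a_ge by (intro ln_pisqrt) simp
    moreover have "ln m2 = ln (pi/6) + ln (a + 24) / 2" unfolding m2_def m2d using a_ge by (intro ln_pisqrt) simp
    ultimately show ?thesis using lnA by simp
  qed
  have lnt: "- t / (1 - t) \<le> ln (1 - t) \<and> ln (1 - t) \<le> - t"
    using ln_upper_lower[of "-t"] t_small by simp
  define Q where "Q = 2 * ln (m1 - 1) - ln (m0 - 1) - ln (m2 - 1)"
  have sum02: "(m0 - 1) + (m2 - 1) \<le> 2 * (m1 - 1)" using D_pos by (simp add: D_def)
  have pos02: "(m0 - 1) * (m2 - 1) > 0" using m0_ge m01 m12 by simp
  have Q_ge: "Q \<ge> 0"
  proof -
    have "0 \<le> (m0 - m2)^2" by simp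
    hence "m0*(m2*2) \<le> m0*m0 + m2*m2" by (simp add: power2_eq_square algebra_simps)
    hence "(m0 - 1) * (m2 - 1) \<le> ((m0 - 1 + (m2 - 1)) / 2)^2"
      by (simp add: power2_eq_square field_simps)
    also have "\<dots> \<le> (m1 - 1)^2" using sum02 m0_ge m12 by (intro power_mono) auto
    moreover have "(m0 - 1) * (m2 - 1) > 0" using m0_ge m01 m12 by simp
    ultimately have "ln ((m0 - 1) * (m2 - 1)) \<le> ln ((m1 - 1)^2)" by (subst ln_le_cancel_iff) auto
    thus ?thesis unfolding Q_def using m0_ge m1_ge m12 by (simp add: ln_mult ln_realpow)
  qed
  define s where "s = m1^2 * t / (m1 - 1)^2"
  have prod_ge: "m0 * m2 \<ge> m1^2 * (1 - t)"
  proof -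
    have "m0 * m2 = (pi/6)^2 * sqrt ((a-24)*(a+24))" unfolding m0_def m2_def m0d m2d using a_ge
      by (simp add: real_sqrt_mult power2_eq_square)
    moreover have "m1^2 * (1 - t) = (pi/6)^2 * (((a-24)*(a+24)) / a)" unfolding m1_def m1d using a_ge
      by (simp add: t_def field_simps power2_eq_square)
    moreover have "((a-24)*(a+24)) / a \<le> sqrt ((a-24)*(a+24))"
    proof -
      have X0: "(a-24)*(a+24) \<ge> 0" using a_ge by simp
      have "sqrt ((a-24)*(a+24)) \<le> sqrt (a^2)" by (rule real_sqrt_le_mono) (simp add: algebra_simps power2_eq_square)
      hence "sqrt ((a-24)*(a+24)) \<le> a" using a_ge by simp
      have "(a-24)*(a+24) = sqrt ((a-24)*(a+24)) * sqrt ((a-24)*(a+24))" using X0 by (metis real_sqrt_mult_self abs_of_nonneg)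
      moreover have "sqrt ((a-24)*(a+24)) * sqrt ((a-24)*(a+24)) \<le> a * sqrt ((a-24)*(a+24))"
        using \<open>sqrt ((a-24)*(a+24)) \<le> a\<close> X0 by (intro mult_right_mono) auto
      ultimately show ?thesis using a_ge by (simp add: divide_le_eq mult.commute)
    qed
    ultimately show ?thesis
      by (metis (no_types, lifting) mult_left_mono times_divide_eq_right zero_le_power2)
  qed
  have x02: "(m0 - 1) * (m2 - 1) \<ge> (m1 - 1)^2 * (1 - s)"
  proof -
    have "(m0 - 1) * (m2 - 1) = m0 * m2 - (m0 + m2) + 1" by (simp add: algebra_simps)
    moreover have "(m1 - 1)^2 * (1 - s) = m1^2 * (1 - t) - 2 * m1 + 1"
    proof -
      have ss: "(m1 - 1)^2 * s = m1^2 * t" using m1_ge unfolding s_def by simp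
      have "(m1 - 1)^2 * (1 - s) = (m1 - 1)^2 - m1^2 * t" by (simp add: right_diff_distrib ss)
      thus ?thesis by (simp add: power2_eq_square algebra_simps)
    qed
    ultimately show ?thesis using prod_ge D_pos by (simp add: D_def)
  qed
  have s_le: "s \<le> (18/17)^2 * t"
  proof -
    have "m1 / (m1 - 1) \<le> 18/17" using m1_ge by (simp add: field_simps)
    hence "(m1 / (m1 - 1))^2 \<le> (18/17)^2" using m1_ge by (intro power_mono) auto
    hence "(m1 / (m1 - 1))^2 * t \<le> (18/17)^2 * t" using t_pos by (intro mult_right_mono) auto
    thus ?thesis by (simp add: s_def power_divide)
  qed
  have s_pos: "s \<ge> 0" using t_pos by (simp add: s_def)
  have s_small: "s \<le> 2/1000" using s_le t_small by (simp add: power2_eq_square)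
  have Q_le: "Q \<le> 3/2 * t"
  proof -
    have "ln ((m1 - 1)^2 * (1 - s)) \<le> ln ((m0 - 1) * (m2 - 1))"
      using x02 m1_ge s_small pos02 by (subst ln_le_cancel_iff) auto
    hence "2 * ln (m1 - 1) + ln (1 - s) \<le> ln (m0 - 1) + ln (m2 - 1)"
      using m1_ge s_small m0_ge m12 by (simp add: ln_mult ln_realpow)
    hence "Q \<le> - ln (1 - s)" by (simp add: Q_def)
    also have "\<dots> \<le> s / (1 - s)" using ln_upper_lower[of "-s"] s_small by simp
    also have "\<dots> \<le> 3/2 * t"
    proof -
      have st: "s * t \<le> 2/1000 * t" using s_small t_pos by (intro mult_right_mono) auto
      have s_le': "s \<le> 324/289 * t" using s_le by (simp add: power2_eq_square)
      have "s \<le> 3/2 * t - 3/2 * (s * t)" using s_le' st t_pos by linarith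
      hence "s \<le> 3/2 * t * (1 - s)" by (simp add: algebra_simps)
      thus ?thesis using s_small by (simp add: field_simps)
    qed
    finally show ?thesis .
  qed
  define E where "E = exp (- m0 / 2)"
  have e0: "\<bar>epsk (n-1)\<bar> \<le> 3/4 * E" unfolding E_def using m0_ge by (intro eps_bound) (auto simp: m0_def)
  have e1: "\<bar>epsk n\<bar> \<le> 3/4 * E" unfolding E_def using m0_ge m01 by (intro eps_bound) (auto simp: m1_def)
  have e2: "\<bar>epsk (n+1)\<bar> \<le> 3/4 * E" unfolding E_def using m0_ge m01 m12 by (intro eps_bound) (auto simp: m2_def)
  define y where "y = m0 / 2"
  have y_ge: "y \<ge> 89/10" using m0_ge by (simp add: y_def)
  have y4: "y^4 \<ge> 2588/1000 * (real n)^2"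
  proof -
    have "y^4 = (pi/12)^4 * (sqrt (a-24))^4" unfolding y_def m0_def m0d by (simp add: power_mult_distrib power_divide)
    also have "(sqrt (a-24))^4 = (a-24)^2" using a_ge
    proof -
      have "(sqrt (a-24))^4 = ((sqrt (a-24))^2)^2" by (simp flip: power_mult)
      thus ?thesis using a_ge by simp
    qed
    finally have yy: "y^4 = (pi/12)^4 * (a-24)^2" .
    have "(314/1200)^4 \<le> (pi/12)^4" using pi314 by (intro power_mono) auto
    moreover have "(235/10 * real n)^2 \<le> (a-24)^2" using n50 by (intro power_mono) (auto simp: a_def)
    ultimately have "(314/1200)^4 * (235/10 * real n)^2 \<le> (pi/12)^4 * (a-24)^2"
      by (intro mult_mono) auto
    moreover have "2588/1000 * (real n)^2 \<le> (314/1200)^4 * (235/10 * real n)^2"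
    proof -
      have eq: "(314/1200)^4 * (235/10 * real n)^2 = ((314/1200)^4*(235/10)^2) * (real n)^2"
        by (simp only: power_mult_distrib mult.assoc)
      have c: "(2588/1000::real) \<le> (314/1200)^4*(235/10)^2" by (simp add: power_divide)
      show ?thesis by (subst eq) (rule mult_right_mono[OF c], simp)
    qed
    ultimately show ?thesis using yy by linarith
  qed
  have expy: "exp y \<ge> 21/10 * (real n)^2"
  proof -
    have "exp y \<ge> 5500 * (y / (89/10))^4" using y_ge by (rule exp_poly)
    moreover have "5500 * (y / (89/10))^4 = 5500 / (89/10)^4 * y^4" by (simp add: power_divide)
    moreover have "5500 / (89/10)^4 * y^4 \<ge> 5500 / (89/10)^4 * (2588/1000 * (real n)^2)"
      using y4 by (intro mult_left_mono) auto
    moreover have "5500 / (89/10)^4 * (2588/1000 * (real n)^2) \<ge> 21/10 * (real n)^2"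
    proof -
      have c2: "(21/10::real) \<le> 5500/(89/10)^4 * (2588/1000)" by (simp add: power_divide)
      show ?thesis by (subst mult.assoc[symmetric]) (rule mult_right_mono[OF c2], simp)
    qed
    ultimately show ?thesis by linarith
  qed
  have E_le: "E \<le> 48/100 / (real n)^2"
  proof -
    have "E = 1 / exp y" by (simp add: E_def y_def exp_minus field_simps)
    also have "\<dots> \<le> 1 / (21/10 * (real n)^2)" using expy n2 n50 by (intro divide_left_mono) (auto intro!: mult_pos_pos)
    also have "\<dots> = (10/21) / (real n)^2" by simp
    also have "\<dots> \<le> 48/100 / (real n)^2" using n2 by (intro divide_right_mono) auto
    finally show ?thesis .
  qed
  have E_small: "E \<le> 1/1000"
  proof -
    have "48/100 / (real n)^2 \<le> 48/100 / 2500" using n2 n50 by (intro divide_left_mono) auto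
    thus ?thesis using E_le by simp
  qed
  have E_pos: "E > 0" by (simp add: E_def)
  have Lb: "\<And>k. \<bar>epsk k\<bar> \<le> 3/4 * E \<Longrightarrow> \<bar>ln (1 + epsk k)\<bar> \<le> 76/100 * E \<and> 1 + epsk k > 0"
  proof -
    fix k assume h: "\<bar>epsk k\<bar> \<le> 3/4 * E"
    have lt: "\<bar>epsk k\<bar> < 1" using h E_small by simp
    have "\<bar>ln (1 + epsk k)\<bar> \<le> \<bar>epsk k\<bar> / (1 - \<bar>epsk k\<bar>)" using lt by (rule ln_abs_bound)
    also have "\<dots> \<le> (3/4 * E) / (1 - 3/4 * E)" using h lt E_small
      by (intro frac_le) auto
    also have "\<dots> \<le> 76/100 * E" using E_small E_pos by (simp add: field_simps)
    finally show "\<bar>ln (1 + epsk k)\<bar> \<le> 76/100 * E \<and> 1 + epsk k > 0" using lt by auto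
  qed
  have L0: "\<bar>ln (1 + epsk (n-1))\<bar> \<le> 76/100 * E" "1 + epsk (n-1) > 0" using Lb[OF e0] by auto
  have L1: "\<bar>ln (1 + epsk n)\<bar> \<le> 76/100 * E" "1 + epsk n > 0" using Lb[OF e1] by auto
  have L2: "\<bar>ln (1 + epsk (n+1))\<bar> \<le> 76/100 * E" "1 + epsk (n+1) > 0" using Lb[OF e2] by auto
  define EP where "EP = 2 * ln (1 + epsk n) - ln (1 + epsk (n-1)) - ln (1 + epsk (n+1))"
  have EP_abs: "\<bar>EP\<bar> \<le> 304/100 * E" using L0 L1 L2 unfolding EP_def by linarith
  have ep1: "- (304/100 * E) \<le> EP" and ep2: "EP \<le> 304/100 * E" using EP_abs by auto
  have lt1: "- (t / (1 - t)) \<le> ln (1 - t)" and lt2: "ln (1 - t) \<le> - t" using lnt by auto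
  have T1_eq: "T1 n = D + ln (1 - t) + Q + ln (1 - t) / 2 + EP"
  proof -
    have l0: "ln (T (n-1)) = ln (sqrt 12) - ln (a - 24) + m0 + ln (m0 - 1) - ln m0 + ln (1 + epsk (n-1))"
    proof -
      have h: "24 * real (n-1) - 1 = a - 24" by (simp add: rn1' a_def algebra_simps)
      have l: "ln (T (n-1)) = ln (sqrt 12) - ln (24 * real (n-1) - 1) + mu (n-1) + ln (mu (n-1) - 1) - ln (mu (n-1)) + ln (1 + epsk (n-1))"
        using m0_ge a_ge L0 by (intro lnT) (auto simp: m0_def rn1' a_def)
      show ?thesis using l unfolding h m0_def .
    qed
    have l1: "ln (T n) = ln (sqrt 12) - ln a + m1 + ln (m1 - 1) - ln m1 + ln (1 + epsk n)"
      using m1_ge a_ge L1 lnT[of n] by (simp add: m1_def a_def)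
    have l2: "ln (T (n+1)) = ln (sqrt 12) - ln (a + 24) + m2 + ln (m2 - 1) - ln m2 + ln (1 + epsk (n+1))"
    proof -
      have h: "24 * real (n+1) - 1 = a + 24" by (simp add: a_def algebra_simps)
      have l: "ln (T (n+1)) = ln (sqrt 12) - ln (24 * real (n+1) - 1) + mu (n+1) + ln (mu (n+1) - 1) - ln (mu (n+1)) + ln (1 + epsk (n+1))"
        using m0_ge m01 m12 a_ge L2 by (intro lnT) (auto simp: m2_def a_def)
      show ?thesis using l unfolding h m2_def .
    qed
    show ?thesis unfolding T1_def l0 l1 l2 using lnA lnM
      by (simp add: D_def Q_def EP_def algebra_simps)
  qed
  have lower: "24 * pi / (24 * (real n + 1) - 1) powr (3 / 2) - 3 / (real n)^2 < T1 n"
  proof -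
    have tt: "t / (1 - t) \<le> 1004/1000 / (real n)^2"
    proof -
      have "t / (1 - t) \<le> (1002/1000 / (real n)^2) / (999/1000)" using t_le t_small t_pos
        by (intro frac_le) auto
      also have "\<dots> = (1002/999) / (real n)^2" by simp
      also have "\<dots> \<le> 1004/1000 / (real n)^2" using n2 by (intro divide_right_mono) auto
      finally show ?thesis .
    qed
    have "T1 n \<ge> D - 3/2 * (t / (1 - t)) - 304/100 * E"
      using T1_eq lt1 Q_ge ep1 by linarith
    moreover have "3/2 * (t / (1 - t)) + 304/100 * E < 3 / (real n)^2"
    proof -
      have "3/2 * (t / (1 - t)) + 304/100 * E \<le> 3/2 * (1004/1000 / (real n)^2) + 304/100 * (48/100 / (real n)^2)"
        using tt E_le by linarith
      also have "\<dots> = (7413/2500) / (real n)^2" by (simp add: divide_simps)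
      also have "\<dots> < 3 / (real n)^2" using n2 n50 by (intro divide_strict_right_mono) auto
      finally show ?thesis .
    qed
    ultimately show ?thesis using D_lo by linarith
  qed
  have upper: "T1 n < 24 * pi / (24 * (real n - 1) - 1) powr (3 / 2) + exp (- C * sqrt (real n) / 10)"
  proof -
    have "T1 n \<le> D + 304/100 * E"
      using T1_eq lt2 Q_le ep2 by linarith
    moreover have "304/100 * E \<le> exp (- C * sqrt (real n) / 10)"
    proof -
      have sn: "sqrt (real n) \<ge> 7" using n50 by (intro real_le_rsqrt) simp
      have sq: "sqrt (a - 24) \<ge> 4 * sqrt (real n)"
      proof -
        have "sqrt (16 * real n) \<le> sqrt (a - 24)" using n50 by (simp add: a_def)
        moreover have "sqrt (16 * real n) = 4 * sqrt (real n)" by (simp add: real_sqrt_mult)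
        ultimately show ?thesis by simp
      qed
      have Cle: "C * sqrt (real n) / 10 \<le> pi * sqrt (real n) / 10"
      proof -
        have "sqrt (2/3::real) \<le> 1" by simp
        hence "C \<le> pi" unfolding C_def by (simp add: mult_left_le)
        thus ?thesis by (intro divide_right_mono mult_right_mono) auto
      qed
      have "y \<ge> pi / 3 * sqrt (real n)"
      proof -
        have "pi/12 * (4 * sqrt (real n)) \<le> pi/12 * sqrt (a - 24)" using sq by (intro mult_left_mono) auto
        thus ?thesis unfolding y_def m0_def m0d by simp
      qed
      hence yC: "y \<ge> C * sqrt (real n) / 10 + 2"
      proof -
        assume "y \<ge> pi / 3 * sqrt (real n)"
        moreover have "pi / 3 * sqrt (real n) - pi * sqrt (real n) / 10 = pi * (7/30) * sqrt (real n)" by (simp add: field_simps)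
        moreover have "pi * (7/30) * sqrt (real n) \<ge> 3 * (7/30) * 7" using sn pi_gt3 by (intro mult_mono) auto
        ultimately show ?thesis using Cle by linarith
      qed
      have "exp (2::real) \<ge> 5"
      proof -
        have "1 + 2 + (2::real)^2/2 \<le> exp 2" by (rule exp_lower_Taylor_quadratic) simp
        thus ?thesis by simp
      qed
      have "E = exp (- C * sqrt (real n) / 10) * exp (-(y - C * sqrt (real n) / 10))"
        by (simp add: E_def y_def exp_add[symmetric])
      also have "\<dots> \<le> exp (- C * sqrt (real n) / 10) * exp (-2)"
        using yC by (intro mult_left_mono) auto
      finally have "E \<le> exp (- C * sqrt (real n) / 10) / exp 2" by (simp add: exp_minus field_simps)
      hence "304/100 * E \<le> 304/100 * (exp (- C * sqrt (real n) / 10) / exp 2)" by simp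
      also have "\<dots> \<le> exp (- C * sqrt (real n) / 10)" using \<open>exp 2 \<ge> 5\<close> by (simp add: field_simps)
      finally show ?thesis .
    qed
    ultimately show ?thesis using D_up by linarith
  qed
  show ?thesis using lower upper by simp
qed

end
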